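(* Let $\Gamma$ be a Shilla distance-regular graph with $b(\Gamma)=b$ and smallest eigenvalue $\theta_3$. Then $-b^2<\theta_3<-b$.
   Context: A connected graph $\Gamma$ of diameter $D$ is distance-regular if there are integers $b_i,c_i$ ($0\le i\le D$) such that for any two vertices $x,y$ at distance $i$, exactly $c_i$ neighbours of $y$ are at distance $i-1$ from $x$ and exactly $b_i$ neighbours of $y$ are at distance $i+1$ from $x$. Then $\Gamma$ is regular of valency $k=b_0$, and $a_i:=k-b_i-c_i$. Its eigenvalues (of the adjacency matrix) are $k=\theta_0>\theta_1>\dots>\theta_D$. A Shilla distance-regular graph is a distance-regular graph of diameter $3$ whose second largest eigenvalue satisfies $\theta_1=a_3$; for such graphs $k=(a_3-a_1)a_3$ and $b(\Gamma):=a_3-a_1=k/a_3$. *)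

theory Defs
  imports Complex_Main
begin

definition simple_graph :: "'a set \<Rightarrow> ('a \<Rightarrow> 'a \<Rightarrow> bool) \<Rightarrow> bool" where
  "simple_graph V E \<longleftrightarrow> finite V \<and> V \<noteq> {} \<and>
     (\<forall>x y. E x y \<longrightarrow> x \<in> V \<and> y \<in> V) \<and>
     (\<forall>x y. E x y \<longrightarrow> E y x) \<and> (\<forall>x. \<not> E x x)"

fun reach :: "('a \<Rightarrow> 'a \<Rightarrow> bool) \<Rightarrow> nat \<Rightarrow> 'a \<Rightarrow> 'a \<Rightarrow> bool" where
  "reach E 0 x y = (x = y)"
| "reach E (Suc n) x y = (\<exists>z. E x z \<and> reach E n z y)"

definition gdist :: "('a \<Rightarrow> 'a \<Rightarrow> bool) \<Rightarrow> 'a \<Rightarrow> 'a \<Rightarrow> nat" where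
  "gdist E x y = (LEAST n. reach E n x y)"

definition connected_graph :: "'a set \<Rightarrow> ('a \<Rightarrow> 'a \<Rightarrow> bool) \<Rightarrow> bool" where
  "connected_graph V E \<longleftrightarrow> (\<forall>x\<in>V. \<forall>y\<in>V. \<exists>n. reach E n x y)"

definition diameter :: "'a set \<Rightarrow> ('a \<Rightarrow> 'a \<Rightarrow> bool) \<Rightarrow> nat" where
  "diameter V E = Max {gdist E x y | x y. x \<in> V \<and> y \<in> V}"

definition distance_regular ::
  "'a set \<Rightarrow> ('a \<Rightarrow> 'a \<Rightarrow> bool) \<Rightarrow> nat \<Rightarrow> (nat \<Rightarrow> nat) \<Rightarrow> (nat \<Rightarrow> nat) \<Rightarrow> bool" where
  "distance_regular V E D b c \<longleftrightarrow>
     simple_graph V E \<and> connected_graph V E \<and> diameter V E = D \<and>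
     (\<forall>i\<le>D. \<forall>x\<in>V. \<forall>y\<in>V. gdist E x y = i \<longrightarrow>
        card {z. E y z \<and> gdist E x z + 1 = i} = c i \<and>
        card {z. E y z \<and> gdist E x z = i + 1} = b i)"

definition intersection_a :: "(nat \<Rightarrow> nat) \<Rightarrow> (nat \<Rightarrow> nat) \<Rightarrow> nat \<Rightarrow> int" where
  "intersection_a b c i = int (b 0) - int (b i) - int (c i)"

definition adj_eigenvalue :: "'a set \<Rightarrow> ('a \<Rightarrow> 'a \<Rightarrow> bool) \<Rightarrow> real \<Rightarrow> bool" where
  "adj_eigenvalue V E \<theta> \<longleftrightarrow> (\<exists>f :: 'a \<Rightarrow> real.
     (\<exists>x\<in>V. f x \<noteq> 0) \<and>
     (\<forall>x\<in>V. (\<Sum>y\<in>{y\<in>V. E x y}. f y) = \<theta> * f x))"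

definition adj_eigenvalues :: "'a set \<Rightarrow> ('a \<Rightarrow> 'a \<Rightarrow> bool) \<Rightarrow> real set" where
  "adj_eigenvalues V E = {\<theta>. adj_eigenvalue V E \<theta>}"

definition second_largest_eigenvalue :: "'a set \<Rightarrow> ('a \<Rightarrow> 'a \<Rightarrow> bool) \<Rightarrow> real" where
  "second_largest_eigenvalue V E =
     Max (adj_eigenvalues V E - {Max (adj_eigenvalues V E)})"

definition smallest_eigenvalue :: "'a set \<Rightarrow> ('a \<Rightarrow> 'a \<Rightarrow> bool) \<Rightarrow> real" where
  "smallest_eigenvalue V E = Min (adj_eigenvalues V E)"

definition shilla :: "'a set \<Rightarrow> ('a \<Rightarrow> 'a \<Rightarrow> bool) \<Rightarrow> (nat \<Rightarrow> nat) \<Rightarrow> (nat \<Rightarrow> nat) \<Rightarrow> bool" where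
  "shilla V E b c \<longleftrightarrow> distance_regular V E 3 b c \<and>
     second_largest_eigenvalue V E = real_of_int (intersection_a b c 3)"

end

theory Submission
  imports Defs "HOL-Computational_Algebra.Polynomial"
begin

lemma reach_append: "reach E m x y \<Longrightarrow> reach E n y z \<Longrightarrow> reach E (m+n) x z"
  by (induction m arbitrary: x) auto

locale drg3 =
  fixes V :: "'a set" and E :: "'a \<Rightarrow> 'a \<Rightarrow> bool" and b c :: "nat \<Rightarrow> nat"
  assumes dr: "distance_regular V E 3 b c"
begin

lemma sg: "simple_graph V E" using dr unfolding distance_regular_def by blast
lemma finV: "finite V" using sg unfolding simple_graph_def by blast
lemma Vne: "V \<noteq> {}" using sg unfolding simple_graph_def by blast
lemma EV: "E x y \<Longrightarrow> x \<in> V \<and> y \<in> V" using sg unfolding simple_graph_def by blast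
lemma Esym: "E x y \<Longrightarrow> E y x" using sg unfolding simple_graph_def by blast
lemma Eirr: "\<not> E x x" using sg unfolding simple_graph_def by blast
lemma conn: "x \<in> V \<Longrightarrow> y \<in> V \<Longrightarrow> \<exists>n. reach E n x y"
  using dr unfolding distance_regular_def connected_graph_def by blast
lemma diam: "diameter V E = 3" using dr unfolding distance_regular_def by blast
lemma cnt: "i \<le> 3 \<Longrightarrow> x \<in> V \<Longrightarrow> y \<in> V \<Longrightarrow> gdist E x y = i \<Longrightarrow>
        card {z. E y z \<and> gdist E x z + 1 = i} = c i \<and>
        card {z. E y z \<and> gdist E x z = i + 1} = b i"
  using dr unfolding distance_regular_def by blast

lemma reach_sym: "reach E n x y \<Longrightarrow> reach E n y x"
proof (induction n arbitrary: x)
  case 0 then show ?case by simp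
next
  case (Suc n)
  then obtain z where z: "E x z" "reach E n z y" by auto
  have "reach E n y z" using Suc.IH z(2) by blast
  moreover have "reach E 1 z x" using z(1) Esym by auto
  ultimately have "reach E (n+1) y x" by (rule reach_append)
  then show ?case by simp
qed

lemma gdist_reach: "x \<in> V \<Longrightarrow> y \<in> V \<Longrightarrow> reach E (gdist E x y) x y"
  unfolding gdist_def using conn by (meson LeastI_ex)

lemma gdist_le: "reach E n x y \<Longrightarrow> gdist E x y \<le> n"
  unfolding gdist_def by (rule Least_le)

lemma gdist_sym: "x \<in> V \<Longrightarrow> y \<in> V \<Longrightarrow> gdist E x y = gdist E y x"
  by (meson antisym gdist_le gdist_reach reach_sym)

lemma gdist_0: "x \<in> V \<Longrightarrow> y \<in> V \<Longrightarrow> gdist E x y = 0 \<longleftrightarrow> x = y"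
  by (metis gdist_le gdist_reach le_zero_eq reach.simps(1))

lemma gdist_refl: "gdist E x x = 0"
  using gdist_le[of 0 x x] by simp

lemma gdist_1: "E x y \<Longrightarrow> gdist E x y = 1"
proof -
  assume e: "E x y"
  have "reach E 1 x y" using e by simp
  hence "gdist E x y \<le> 1" by (rule gdist_le)
  moreover have "x \<noteq> y" using e Eirr by blast
  hence "gdist E x y \<noteq> 0" using gdist_0 EV e by blast
  ultimately show ?thesis by simp
qed

lemma gdist_1_iff: "x \<in> V \<Longrightarrow> y \<in> V \<Longrightarrow> gdist E x y = 1 \<longleftrightarrow> E x y"
  using gdist_1 gdist_reach by fastforce

lemma gdist_tri: "x \<in> V \<Longrightarrow> y \<in> V \<Longrightarrow> z \<in> V \<Longrightarrow> gdist E x z \<le> gdist E x y + gdist E y z"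
  by (meson gdist_le gdist_reach reach_append)

lemma adj_le: "x \<in> V \<Longrightarrow> E y z \<Longrightarrow> gdist E x z \<le> gdist E x y + 1"
  using gdist_tri[of x y z] gdist_1[of y z] EV by force

lemma adj_cases: "x \<in> V \<Longrightarrow> E y z \<Longrightarrow>
   gdist E x z + 1 = gdist E x y \<or> gdist E x z = gdist E x y \<or> gdist E x z = gdist E x y + 1"
  using adj_le[of x y z] adj_le[of x z y] Esym by force

lemma distset_fin: "finite {gdist E x y | x y. x \<in> V \<and> y \<in> V}"
proof -
  have "{gdist E x y | x y. x \<in> V \<and> y \<in> V} = (\<lambda>(x,y). gdist E x y) ` (V \<times> V)" by auto
  thus ?thesis using finV by simp
qed

lemma gdist_le3: "x \<in> V \<Longrightarrow> y \<in> V \<Longrightarrow> gdist E x y \<le> 3"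
  using diam distset_fin unfolding diameter_def
  by (metis (mono_tags, lifting) Max_ge mem_Collect_eq)

lemma exists3: "\<exists>x y. x \<in> V \<and> y \<in> V \<and> gdist E x y = 3"
proof -
  have "{gdist E x y | x y. x \<in> V \<and> y \<in> V} \<noteq> {}" using Vne by blast
  from Max_in[OF distset_fin this] diam show ?thesis unfolding diameter_def by auto
qed

lemma step_down: "x \<in> V \<Longrightarrow> y \<in> V \<Longrightarrow> gdist E x y = Suc n \<Longrightarrow> \<exists>z. E y z \<and> gdist E x z = n"
proof -
  assume xy: "x \<in> V" "y \<in> V" "gdist E x y = Suc n"
  have "reach E (Suc n) y x" using gdist_reach[OF xy(1,2)] xy(3) reach_sym by metis
  then obtain z where z: "E y z" "reach E n z x" by auto
  have "gdist E z x \<le> n" using z(2) by (rule gdist_le)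
  hence "gdist E x z \<le> n" using gdist_sym EV z(1) xy by metis
  moreover have "gdist E x y \<le> gdist E x z + 1" using adj_le[of x z y] xy(1) Esym z(1) by blast
  ultimately show ?thesis using xy(3) z(1) by (intro exI[of _ z]) auto
qed

lemma chain: "\<exists>x y1 y2 y3. x \<in> V \<and> y1 \<in> V \<and> y2 \<in> V \<and> y3 \<in> V \<and> E x y1 \<and> E y1 y2 \<and> E y2 y3 \<and>
   gdist E x y1 = 1 \<and> gdist E x y2 = 2 \<and> gdist E x y3 = 3"
proof -
  obtain x y3 where a: "x \<in> V" "y3 \<in> V" "gdist E x y3 = 3" using exists3 by blast
  obtain y2 where b: "E y3 y2" "gdist E x y2 = 2" using step_down[OF a(1,2)] a(3) by (metis numeral_3_eq_3 numeral_2_eq_2)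
  have y2: "y2 \<in> V" using EV b by blast
  obtain y1 where d: "E y2 y1" "gdist E x y1 = 1" using step_down[OF a(1) y2] b(2) by (metis numeral_2_eq_2 One_nat_def)
  have y1: "y1 \<in> V" using EV d by blast
  have "E x y1" using gdist_1_iff[OF a(1) y1] d by simp
  thus ?thesis using a b d y1 y2 Esym by blast
qed

end

context drg3 begin

abbreviation "kk \<equiv> real (b 0)"
abbreviation "bb i \<equiv> real (b i)"
abbreviation "cc i \<equiv> real (c i)"
abbreviation "aa i \<equiv> real_of_int (intersection_a b c i)"

lemma aa_eq: "aa i = kk - bb i - cc i"
  unfolding intersection_a_def by simp

lemma Nb_eq: "{z\<in>V. E y z} = {z. E y z}" using EV by blast
lemma Nb_fin: "finite {z\<in>V. E y z}" using finV by simp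

lemma deg: "y \<in> V \<Longrightarrow> card {z\<in>V. E y z} = b 0"
proof -
  assume y: "y \<in> V"
  have "card {z. E y z \<and> gdist E y z = 0 + 1} = b 0" using cnt[of 0 y y] y gdist_refl by simp
  moreover have "{z. E y z \<and> gdist E y z = 0 + 1} = {z\<in>V. E y z}" using gdist_1 EV by auto
  ultimately show ?thesis by simp
qed

lemma nsum_gen:
  assumes x: "x \<in> V" and y: "y \<in> V"
  defines "i \<equiv> gdist E x y"
  shows "(\<Sum>z\<in>{z\<in>V. E y z}. h (gdist E x z)) =
     real (card {z\<in>V. E y z \<and> gdist E x z + 1 = i}) * h (i - 1)
   + real (card {z\<in>V. E y z \<and> gdist E x z = i}) * h i
   + real (card {z\<in>V. E y z \<and> gdist E x z = i + 1}) * h (i + 1)"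
proof -
  let ?N = "{z\<in>V. E y z}"
  have "(\<Sum>z\<in>?N. h (gdist E x z)) = (\<Sum>z\<in>?N. (if gdist E x z + 1 = i then h (i - 1) else 0)
      + (if gdist E x z = i then h i else 0) + (if gdist E x z = i + 1 then h (i+1) else 0))"
  proof (rule sum.cong[OF refl])
    fix z assume z: "z \<in> ?N"
    have "gdist E x z + 1 = i \<or> gdist E x z = i \<or> gdist E x z = i + 1"
      using adj_cases[OF x, of y z] z unfolding i_def by blast
    then show "h (gdist E x z) = (if gdist E x z + 1 = i then h (i - 1) else 0)
      + (if gdist E x z = i then h i else 0) + (if gdist E x z = i + 1 then h (i+1) else 0)"
      by auto
  qed
  also have "\<dots> = (\<Sum>z\<in>?N. (if gdist E x z + 1 = i then h (i - 1) else 0))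
      + (\<Sum>z\<in>?N. (if gdist E x z = i then h i else 0)) + (\<Sum>z\<in>?N. (if gdist E x z = i + 1 then h (i+1) else 0))"
    by (simp add: sum.distrib)
  also have "\<dots> = real (card {z\<in>?N. gdist E x z + 1 = i}) * h (i - 1)
   + real (card {z\<in>?N. gdist E x z = i}) * h i
   + real (card {z\<in>?N. gdist E x z = i + 1}) * h (i + 1)"
    using Nb_fin by (simp add: sum.inter_filter[symmetric])
  also have "{z\<in>?N. gdist E x z + 1 = i} = {z\<in>V. E y z \<and> gdist E x z + 1 = i}" by auto
  also have "{z\<in>?N. gdist E x z = i} = {z\<in>V. E y z \<and> gdist E x z = i}" by auto
  also have "{z\<in>?N. gdist E x z = i + 1} = {z\<in>V. E y z \<and> gdist E x z = i + 1}" by auto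
  finally show ?thesis .
qed

lemma cnt_c: "x \<in> V \<Longrightarrow> y \<in> V \<Longrightarrow> card {z\<in>V. E y z \<and> gdist E x z + 1 = gdist E x y} = c (gdist E x y)"
proof -
  assume xy: "x \<in> V" "y \<in> V"
  have "{z\<in>V. E y z \<and> gdist E x z + 1 = gdist E x y} = {z. E y z \<and> gdist E x z + 1 = gdist E x y}" using EV by blast
  thus ?thesis using cnt[OF gdist_le3[OF xy] xy refl] by simp
qed

lemma cnt_b: "x \<in> V \<Longrightarrow> y \<in> V \<Longrightarrow> card {z\<in>V. E y z \<and> gdist E x z = gdist E x y + 1} = b (gdist E x y)"
proof -
  assume xy: "x \<in> V" "y \<in> V"
  have "{z\<in>V. E y z \<and> gdist E x z = gdist E x y + 1} = {z. E y z \<and> gdist E x z = gdist E x y + 1}" using EV by blast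
  thus ?thesis using cnt[OF gdist_le3[OF xy] xy refl] by simp
qed

lemma cnt_a: "x \<in> V \<Longrightarrow> y \<in> V \<Longrightarrow> real (card {z\<in>V. E y z \<and> gdist E x z = gdist E x y}) = aa (gdist E x y)"
proof -
  assume xy: "x \<in> V" "y \<in> V"
  have "real (card {z\<in>V. E y z}) = (\<Sum>z\<in>{z\<in>V. E y z}. (\<lambda>_. 1::real) (gdist E x z))" by simp
  also have "\<dots> = real (c (gdist E x y)) + real (card {z\<in>V. E y z \<and> gdist E x z = gdist E x y}) + real (b (gdist E x y))"
    using nsum_gen[OF xy, of "\<lambda>_. 1"] cnt_c[OF xy] cnt_b[OF xy] by simp
  finally show ?thesis using deg[OF xy(2)] aa_eq by simp
qed

lemma nsum:
  assumes x: "x \<in> V" and y: "y \<in> V"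
  shows "(\<Sum>z\<in>{z\<in>V. E y z}. h (gdist E x z)) =
     cc (gdist E x y) * h (gdist E x y - 1) + aa (gdist E x y) * h (gdist E x y) + bb (gdist E x y) * h (gdist E x y + 1)"
  using nsum_gen[OF x y, of h] cnt_c[OF x y] cnt_b[OF x y] cnt_a[OF x y] by simp

lemma c0: "c 0 = 0"
proof -
  obtain x where "x \<in> V" using Vne by blast
  thus ?thesis using cnt_c[of x x] gdist_refl by simp
qed

lemma b3: "b 3 = 0"
proof -
  obtain x y where xy: "x \<in> V" "y \<in> V" "gdist E x y = 3" using exists3 by blast
  have "{z\<in>V. E y z \<and> gdist E x z = gdist E x y + 1} = {}" using xy(1) gdist_le3 xy(3) by fastforce
  thus ?thesis using cnt_b[OF xy(1,2)] xy(3) by (metis card.empty)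
qed

lemma c1: "c 1 = 1"
proof -
  obtain x y1 where a: "x \<in> V" "y1 \<in> V" "E x y1" "gdist E x y1 = 1" using chain by blast
  have "{z\<in>V. E y1 z \<and> gdist E x z + 1 = gdist E x y1} = {x}"
    using a gdist_0[OF a(1)] Esym by auto
  thus ?thesis using cnt_c[OF a(1,2)] a(4) by simp
qed

lemma pos_params: "c 2 \<ge> 1 \<and> c 3 \<ge> 1 \<and> b 0 \<ge> 1 \<and> b 1 \<ge> 1 \<and> b 2 \<ge> 1"
proof -
  obtain x y1 y2 y3 where a: "x \<in> V \<and> y1 \<in> V \<and> y2 \<in> V \<and> y3 \<in> V \<and> E x y1 \<and> E y1 y2 \<and> E y2 y3 \<and>
   gdist E x y1 = 1 \<and> gdist E x y2 = 2 \<and> gdist E x y3 = 3" using chain by blast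
  have fin: "\<And>P. finite {z\<in>V. P z}" using finV by simp
  have "y1 \<in> {z\<in>V. E y2 z \<and> gdist E x z + 1 = gdist E x y2}" using a Esym by auto
  hence 1: "c 2 \<ge> 1" using cnt_c[of x y2] a card_gt_0_iff fin
    by (metis One_nat_def Suc_leI empty_iff)
  have "y2 \<in> {z\<in>V. E y3 z \<and> gdist E x z + 1 = gdist E x y3}" using a Esym by auto
  hence 2: "c 3 \<ge> 1" using cnt_c[of x y3] a card_gt_0_iff fin
    by (metis One_nat_def Suc_leI empty_iff)
  have "y1 \<in> {z\<in>V. E x z \<and> gdist E x z = gdist E x x + 1}" using a gdist_refl by auto
  hence 3: "b 0 \<ge> 1" using cnt_b[of x x] a card_gt_0_iff fin gdist_refl
    by (metis One_nat_def Suc_leI empty_iff)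
  have "y2 \<in> {z\<in>V. E y1 z \<and> gdist E x z = gdist E x y1 + 1}" using a by auto
  hence 4: "b 1 \<ge> 1" using cnt_b[of x y1] a card_gt_0_iff fin
    by (metis One_nat_def Suc_leI empty_iff)
  have "y3 \<in> {z\<in>V. E y2 z \<and> gdist E x z = gdist E x y2 + 1}" using a by auto
  hence 5: "b 2 \<ge> 1" using cnt_b[of x y2] a card_gt_0_iff fin
    by (metis Suc_leI empty_iff numeral_2_eq_2 One_nat_def)
  show ?thesis using 1 2 3 4 5 by blast
qed

lemma aa_nonneg: "i \<le> 3 \<Longrightarrow> aa i \<ge> 0"
proof -
  assume i: "i \<le> 3"
  obtain x y1 y2 y3 where a: "x \<in> V \<and> y1 \<in> V \<and> y2 \<in> V \<and> y3 \<in> V \<and> E x y1 \<and> E y1 y2 \<and> E y2 y3 \<and>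
   gdist E x y1 = 1 \<and> gdist E x y2 = 2 \<and> gdist E x y3 = 3" using chain by blast
  have "\<exists>y\<in>V. gdist E x y = i"
  proof -
    have "i = 0 \<or> i = 1 \<or> i = 2 \<or> i = 3" using i by auto
    thus ?thesis using a gdist_refl by blast
  qed
  then obtain y where "y \<in> V" "gdist E x y = i" by blast
  thus ?thesis using cnt_a[of x y] a by (metis of_nat_0_le_iff)
qed

end

context drg3 begin

lemma params: "kk \<ge> 1" "bb 1 \<ge> 1" "bb 2 \<ge> 1" "cc 2 \<ge> 1" "cc 3 \<ge> 1" "cc 1 = 1" "cc 0 = 0" "bb 3 = 0"
  "aa 0 = 0"
  using pos_params c1 c0 b3 aa_eq[of 0] by auto

lemma split_dist:
  fixes H :: "nat \<Rightarrow> real" and G :: "'a \<Rightarrow> real"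
  assumes x: "x \<in> V"
  shows "(\<Sum>z\<in>V. H (gdist E x z) * G z) = (\<Sum>j<4. H j * (\<Sum>z\<in>{z\<in>V. gdist E x z = j}. G z))"
proof -
  have "(\<Sum>j<4. H j * (\<Sum>z\<in>{z\<in>V. gdist E x z = j}. G z))
      = (\<Sum>j<4. \<Sum>z\<in>V. (if gdist E x z = j then H j * G z else 0))"
  proof (rule sum.cong[OF refl])
    fix j
    have "H j * (\<Sum>z\<in>{z\<in>V. gdist E x z = j}. G z) = (\<Sum>z\<in>{z\<in>V. gdist E x z = j}. H j * G z)"
      by (simp add: sum_distrib_left)
    also have "\<dots> = (\<Sum>z\<in>V. if gdist E x z = j then H j * G z else 0)"
      by (rule sum.inter_filter[OF finV])
    finally show "H j * (\<Sum>z\<in>{z\<in>V. gdist E x z = j}. G z) = (\<Sum>z\<in>V. if gdist E x z = j then H j * G z else 0)" .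
  qed
  also have "\<dots> = (\<Sum>z\<in>V. \<Sum>j<4. (if gdist E x z = j then H j * G z else 0))"
    by (rule sum.swap)
  also have "\<dots> = (\<Sum>z\<in>V. H (gdist E x z) * G z)"
  proof (rule sum.cong[OF refl])
    fix z assume z: "z \<in> V"
    have "gdist E x z < 4" using gdist_le3[OF x z] by simp
    thus "(\<Sum>j<4. (if gdist E x z = j then H j * G z else 0)) = H (gdist E x z) * G z"
      by (simp add: sum.delta)
  qed
  finally show ?thesis by simp
qed

definition "Cf i j = cc j * (if j - 1 = i then 1 else 0) + aa j * (if j = i then 1 else 0)
     + bb j * (if j + 1 = i then 1 else 0)"

lemma eig_rec_gen:
  fixes g :: "'a \<Rightarrow> real"
  assumes x: "x \<in> V" and eig: "\<forall>y\<in>V. (\<Sum>z\<in>{z\<in>V. E y z}. g z) = \<theta> * g y"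
  shows "\<theta> * (\<Sum>y\<in>{y\<in>V. gdist E x y = i}. g y) = (\<Sum>j<4. Cf i j * (\<Sum>z\<in>{z\<in>V. gdist E x z = j}. g z))"
proof -
  have "\<theta> * (\<Sum>y\<in>{y\<in>V. gdist E x y = i}. g y) = (\<Sum>y\<in>{y\<in>V. gdist E x y = i}. \<theta> * g y)"
    by (simp add: sum_distrib_left)
  also have "\<dots> = (\<Sum>y\<in>{y\<in>V. gdist E x y = i}. \<Sum>z\<in>{z\<in>V. E y z}. g z)"
    using eig by simp
  also have "\<dots> = (\<Sum>y\<in>V. \<Sum>z\<in>V. (if gdist E x y = i \<and> E y z then g z else 0))"
    by (simp add: sum.inter_filter[OF finV] if_distrib cong: if_cong, intro sum.cong refl, auto)
  also have "\<dots> = (\<Sum>z\<in>V. \<Sum>y\<in>V. (if gdist E x y = i \<and> E y z then g z else 0))"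
    by (rule sum.swap)
  also have "\<dots> = (\<Sum>z\<in>V. g z * (\<Sum>y\<in>{y\<in>V. E z y}. (\<lambda>n. if n = i then 1 else 0) (gdist E x y)))"
  proof (rule sum.cong[OF refl])
    fix z assume z: "z \<in> V"
    have "(\<Sum>y\<in>V. (if gdist E x y = i \<and> E y z then g z else 0))
       = (\<Sum>y\<in>V. g z * (if E z y then (if gdist E x y = i then 1 else 0) else 0))"
      using Esym by (intro sum.cong) auto
    also have "\<dots> = g z * (\<Sum>y\<in>{y\<in>V. E z y}. (if gdist E x y = i then 1 else 0))"
      using finV by (simp add: sum.inter_filter sum_distrib_left)
    finally show "(\<Sum>y\<in>V. (if gdist E x y = i \<and> E y z then g z else 0)) =
       g z * (\<Sum>y\<in>{y\<in>V. E z y}. (\<lambda>n. if n = i then 1 else 0) (gdist E x y))" by simp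
  qed
  also have "\<dots> = (\<Sum>z\<in>V. Cf i (gdist E x z) * g z)"
    by (intro sum.cong refl, subst nsum[OF x], auto simp: Cf_def)
  also have "\<dots> = (\<Sum>j<4. Cf i j * (\<Sum>z\<in>{z\<in>V. gdist E x z = j}. g z))"
    by (rule split_dist[OF x])
  finally show ?thesis .
qed

end

context drg3 begin

definition "P2 t = (t - aa 1) * t - kk"
definition "P3 t = (t - aa 2) * P2 t - bb 1 * cc 2 * t"
definition "P4 t = (t - aa 3) * P3 t - bb 2 * cc 3 * P2 t"

lemma S0: "x \<in> V \<Longrightarrow> (\<Sum>z\<in>{z\<in>V. gdist E x z = 0}. g z) = g x"
proof -
  assume x: "x \<in> V"
  have "{z\<in>V. gdist E x z = 0} = {x}" using gdist_0[OF x] x by auto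
  thus ?thesis by simp
qed

lemma eig_S:
  fixes g :: "'a \<Rightarrow> real"
  assumes x: "x \<in> V" and eig: "\<forall>y\<in>V. (\<Sum>z\<in>{z\<in>V. E y z}. g z) = \<theta> * g y"
  defines "S \<equiv> \<lambda>j. (\<Sum>z\<in>{z\<in>V. gdist E x z = j}. g z)"
  shows "S 0 = g x" "S 1 = \<theta> * S 0" "S 2 = P2 \<theta> * S 0 / cc 2" "S 3 = P3 \<theta> * S 0 / (cc 2 * cc 3)"
    "P4 \<theta> * S 0 = 0"
proof -
  have e: "\<And>i. \<theta> * S i = (\<Sum>j<4. Cf i j * S j)" unfolding S_def using eig_rec_gen[OF x eig] by blast
  have e0: "\<theta> * S 0 = S 1" using e[of 0] params by (simp add: Cf_def eval_nat_numeral)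
  have e1: "\<theta> * S 1 = kk * S 0 + aa 1 * S 1 + cc 2 * S 2" using e[of 1] params by (simp add: Cf_def eval_nat_numeral)
  have e2: "\<theta> * S 2 = bb 1 * S 1 + aa 2 * S 2 + cc 3 * S 3" using e[of 2] params by (simp add: Cf_def eval_nat_numeral)
  have e3: "\<theta> * S 3 = bb 2 * S 2 + aa 3 * S 3" using e[of 3] params by (simp add: Cf_def eval_nat_numeral)
  show "S 0 = g x" unfolding S_def by (rule S0[OF x])
  show s1: "S 1 = \<theta> * S 0" using e0 by simp
  have c2: "cc 2 * S 2 = P2 \<theta> * S 0"
  proof -
    have "cc 2 * S 2 - P2 \<theta> * S 0 = -(\<theta> * S 1 - (kk * S 0 + aa 1 * S 1 + cc 2 * S 2)) + (\<theta> - aa 1)*(S 1 - \<theta> * S 0)"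
      unfolding P2_def by (simp add: algebra_simps)
    thus ?thesis using e1 s1 by simp
  qed
  show s2: "S 2 = P2 \<theta> * S 0 / cc 2" using c2 params by (simp add: field_simps)
  have c3: "cc 2 * cc 3 * S 3 = P3 \<theta> * S 0"
  proof -
    have "cc 2 * cc 3 * S 3 - P3 \<theta> * S 0 = - cc 2 * (\<theta> * S 2 - (bb 1 * S 1 + aa 2 * S 2 + cc 3 * S 3))
       + (\<theta> - aa 2) * (cc 2 * S 2 - P2 \<theta> * S 0) - bb 1 * cc 2 * (S 1 - \<theta> * S 0)"
      unfolding P3_def by (simp add: algebra_simps)
    thus ?thesis using e2 s1 c2 by simp
  qed
  show "S 3 = P3 \<theta> * S 0 / (cc 2 * cc 3)" using c3 params by (simp add: field_simps)
  have "P4 \<theta> * S 0 = cc 2 * cc 3 * (\<theta> * S 3 - (bb 2 * S 2 + aa 3 * S 3))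
      - (\<theta> - aa 3) * (cc 2 * cc 3 * S 3 - P3 \<theta> * S 0) + bb 2 * cc 3 * (cc 2 * S 2 - P2 \<theta> * S 0)"
    unfolding P4_def by (simp add: algebra_simps)
  thus "P4 \<theta> * S 0 = 0" using e3 c2 c3 by simp
qed

end

lemma alg1: "(k::real) \<noteq> 0 \<Longrightarrow> 1 + a1 * (t / k) + ((t - a1) * t - k) / k = t * (t / k)"
  by (simp add: field_simps)
lemma alg2: "(k::real) \<noteq> 0 \<Longrightarrow> b1 \<noteq> 0 \<Longrightarrow> b2 \<noteq> 0 \<Longrightarrow> p3 = (t - a2) * p2 - b1 * c2 * t \<Longrightarrow>
   c2 * (t / k) + a2 * (p2 / (k * b1)) + b2 * (p3 / (k * b1 * b2)) = t * (p2 / (k * b1))"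
  by (simp add: field_simps)
lemma alg3: "(k::real) \<noteq> 0 \<Longrightarrow> b1 \<noteq> 0 \<Longrightarrow> b2 \<noteq> 0 \<Longrightarrow> (t - a3) * p3 - b2 * c3 * p2 = 0 \<Longrightarrow>
   c3 * (p2 / (k * b1)) + a3 * (p3 / (k * b1 * b2)) = t * (p3 / (k * b1 * b2))"
  by (simp add: field_simps)

context drg3 begin

definition w :: "real \<Rightarrow> nat \<Rightarrow> real" where "w \<theta> i = (if i = 0 then 1 else if i = 1 then \<theta> / kk else if i = 2 then P2 \<theta> / (kk * bb 1)
   else P3 \<theta> / (kk * bb 1 * bb 2))"

lemma w_simps: "w \<theta> 0 = 1" "w \<theta> 1 = \<theta> / kk" "w \<theta> 2 = P2 \<theta> / (kk * bb 1)" "w \<theta> 3 = P3 \<theta> / (kk * bb 1 * bb 2)"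
  unfolding w_def by auto

lemma w_Suc0: "w \<theta> (Suc 0) = \<theta> / kk" unfolding w_def by auto

lemma sph:
  assumes r: "P4 \<theta> = 0" and x0: "x0 \<in> V" and y: "y \<in> V"
  shows "(\<Sum>z\<in>{z\<in>V. E y z}. w \<theta> (gdist E x0 z)) = \<theta> * w \<theta> (gdist E x0 y)"
proof -
  have nz: "kk \<noteq> 0" "bb 1 \<noteq> 0" "bb 2 \<noteq> 0" using params by auto
  have i: "gdist E x0 y = 0 \<or> gdist E x0 y = 1 \<or> gdist E x0 y = 2 \<or> gdist E x0 y = 3"
    using gdist_le3[OF x0 y] by auto
  have "(\<Sum>z\<in>{z\<in>V. E y z}. w \<theta> (gdist E x0 z)) = cc (gdist E x0 y) * w \<theta> (gdist E x0 y - 1)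
      + aa (gdist E x0 y) * w \<theta> (gdist E x0 y) + bb (gdist E x0 y) * w \<theta> (gdist E x0 y + 1)"
    by (rule nsum[OF x0 y])
  also have "\<dots> = \<theta> * w \<theta> (gdist E x0 y)"
  proof -
    have c0: "gdist E x0 y = 0 \<Longrightarrow> ?thesis" using params nz by (simp add: w_simps w_Suc0)
    have c1: "gdist E x0 y = 1 \<Longrightarrow> ?thesis"
    proof -
      assume d: "gdist E x0 y = 1"
      have "cc 1 * w \<theta> 0 + aa 1 * w \<theta> 1 + bb 1 * w \<theta> 2 = \<theta> * w \<theta> 1"
        using params alg1[OF nz(1), of "aa 1" \<theta>] nz unfolding w_simps P2_def by simp
      thus ?thesis using d by (simp add: numeral_2_eq_2)
    qed
    have c2: "gdist E x0 y = 2 \<Longrightarrow> ?thesis"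
    proof -
      assume d: "gdist E x0 y = 2"
      have "cc 2 * w \<theta> 1 + aa 2 * w \<theta> 2 + bb 2 * w \<theta> 3 = \<theta> * w \<theta> 2"
        unfolding w_simps by (rule alg2[OF nz]) (simp add: P3_def)
      thus ?thesis using d by (simp add: numeral_2_eq_2 numeral_3_eq_3)
    qed
    have c3: "gdist E x0 y = 3 \<Longrightarrow> ?thesis"
    proof -
      assume d: "gdist E x0 y = 3"
      have "cc 3 * w \<theta> 2 + aa 3 * w \<theta> 3 = \<theta> * w \<theta> 3"
        unfolding w_simps by (rule alg3[OF nz]) (use r in \<open>simp add: P4_def\<close>)
      thus ?thesis using d params by (simp add: numeral_2_eq_2 numeral_3_eq_3)
    qed
    show ?thesis using i c0 c1 c2 c3 by fast
  qed
  finally show ?thesis .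
qed

lemma eig_root: "adj_eigenvalue V E \<theta> \<Longrightarrow> P4 \<theta> = 0"
proof -
  assume "adj_eigenvalue V E \<theta>"
  then obtain f :: "'a \<Rightarrow> real" and x where f: "x \<in> V" "f x \<noteq> 0"
    "\<forall>x\<in>V. (\<Sum>y\<in>{y\<in>V. E x y}. f y) = \<theta> * f x"
    unfolding adj_eigenvalue_def by blast
  from eig_S(1,5)[OF f(1) f(3)] f(2) show ?thesis by simp
qed

lemma root_eig: "P4 \<theta> = 0 \<Longrightarrow> adj_eigenvalue V E \<theta>"
proof -
  assume r: "P4 \<theta> = 0"
  obtain x0 where x0: "x0 \<in> V" using Vne by blast
  show ?thesis unfolding adj_eigenvalue_def
    apply (rule exI[of _ "\<lambda>y. w \<theta> (gdist E x0 y)"])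
    using sph[OF r x0] x0 gdist_refl[of x0] w_simps(1) by (auto intro!: bexI[of _ x0])
qed

lemma eig_le_k: "adj_eigenvalue V E \<theta> \<Longrightarrow> \<theta> \<le> kk"
proof -
  assume "adj_eigenvalue V E \<theta>"
  then obtain f :: "'a \<Rightarrow> real" and x0 where f: "x0 \<in> V" "f x0 \<noteq> 0"
    "\<forall>x\<in>V. (\<Sum>y\<in>{y\<in>V. E x y}. f y) = \<theta> * f x"
    unfolding adj_eigenvalue_def by blast
  define m where "m = Max ((\<lambda>y. \<bar>f y\<bar>) ` V)"
  have fin: "finite ((\<lambda>y. \<bar>f y\<bar>) ` V)" using finV by simp
  have "m \<in> (\<lambda>y. \<bar>f y\<bar>) ` V" unfolding m_def using Max_in[OF fin] Vne by blast
  then obtain x where x: "x \<in> V" "\<bar>f x\<bar> = m" by blast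
  have ge: "\<And>y. y \<in> V \<Longrightarrow> \<bar>f y\<bar> \<le> m" unfolding m_def using Max_ge[OF fin] by blast
  have mpos: "m > 0" using ge[OF f(1)] f(2) by simp
  have "\<bar>\<theta>\<bar> * m = \<bar>\<Sum>y\<in>{y\<in>V. E x y}. f y\<bar>" using f(3) x by (simp add: abs_mult)
  also have "\<dots> \<le> (\<Sum>y\<in>{y\<in>V. E x y}. \<bar>f y\<bar>)" by (rule sum_abs)
  also have "\<dots> \<le> (\<Sum>y\<in>{y\<in>V. E x y}. m)" by (rule sum_mono) (use ge in auto)
  also have "\<dots> = kk * m" using deg[OF x(1)] by simp
  finally have "\<bar>\<theta>\<bar> * m \<le> kk * m" .
  hence "\<bar>\<theta>\<bar> \<le> kk" using mpos by simp
  thus ?thesis by simp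
qed

lemma k_eig: "adj_eigenvalue V E kk"
proof -
  obtain x0 where x0: "x0 \<in> V" using Vne by blast
  show ?thesis unfolding adj_eigenvalue_def
    by (rule exI[of _ "\<lambda>_. 1"]) (use x0 deg in auto)
qed

definition "lam \<theta> = 1 + \<theta> * \<theta> / kk + P2 \<theta> * P2 \<theta> / (kk * bb 1 * cc 2)
    + P3 \<theta> * P3 \<theta> / (kk * bb 1 * bb 2 * cc 2 * cc 3)"

lemma lam_pos: "lam \<theta> > 0"
proof -
  have "0 \<le> \<theta> * \<theta> / kk" using params by simp
  moreover have "0 \<le> P2 \<theta> * P2 \<theta> / (kk * bb 1 * cc 2)" using params by simp
  moreover have "0 \<le> P3 \<theta> * P3 \<theta> / (kk * bb 1 * bb 2 * cc 2 * cc 3)" using params by simp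
  ultimately show ?thesis unfolding lam_def by linarith
qed

lemma gram:
  assumes r: "P4 \<theta> = 0" and y: "y \<in> V" and z: "z \<in> V"
  shows "(\<Sum>v\<in>V. w \<theta> (gdist E y v) * w \<theta> (gdist E z v)) = lam \<theta> * w \<theta> (gdist E y z)"
proof -
  define g where "g = (\<lambda>v. w \<theta> (gdist E z v))"
  have eig: "\<forall>u\<in>V. (\<Sum>v\<in>{v\<in>V. E u v}. g v) = \<theta> * g u" unfolding g_def using sph[OF r z] by blast
  define S where "S = (\<lambda>j. (\<Sum>v\<in>{v\<in>V. gdist E y v = j}. g v))"
  have e: "S 0 = g y" "S 1 = \<theta> * S 0" "S 2 = P2 \<theta> * S 0 / cc 2" "S 3 = P3 \<theta> * S 0 / (cc 2 * cc 3)"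
    unfolding S_def using eig_S[OF y eig] by auto
  have "(\<Sum>v\<in>V. w \<theta> (gdist E y v) * w \<theta> (gdist E z v)) = (\<Sum>v\<in>V. w \<theta> (gdist E y v) * g v)"
    unfolding g_def ..
  also have "\<dots> = (\<Sum>j<4. w \<theta> j * S j)" unfolding S_def by (rule split_dist[OF y])
  also have "\<dots> = w \<theta> 0 * S 0 + w \<theta> 1 * S 1 + w \<theta> 2 * S 2 + w \<theta> 3 * S 3"
    by (simp add: eval_nat_numeral)
  also have "\<dots> = 1 * S 0 + \<theta> / kk * (\<theta> * S 0) + P2 \<theta> / (kk * bb 1) * (P2 \<theta> * S 0 / cc 2)
     + P3 \<theta> / (kk * bb 1 * bb 2) * (P3 \<theta> * S 0 / (cc 2 * cc 3))"
    by (simp only: w_simps e(2,3,4))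
  also have "\<dots> = lam \<theta> * S 0"
    using params unfolding lam_def by (simp add: field_simps)
  also have "S 0 = w \<theta> (gdist E y z)" using e(1) unfolding g_def using gdist_sym[OF y z] by simp
  finally show ?thesis .
qed

end

lemma algR: assumes h1: "(a1::real) = k - b1 - 1" and h2: "a2 = k - b2 - c2" and h3: "a3 = k - c3"
  shows "(t - a3) * ((t - a2) * ((t - a1) * t - k) - b1 * c2 * t) - b2 * c3 * ((t - a1) * t - k)
  = (t - k) * (((t - a2) * ((t - a1) * t - k) - b1 * c2 * t) + c3 * (((t - a1) * t - k) + c2 * (t + 1)))"
  unfolding h1 h2 h3 by (simp add: algebra_simps)

lemma algRexp: "((t::real) - a2) * ((t - a1) * t - k) - b1 * c2 * t + c3 * (((t - a1) * t - k) + c2 * (t + 1))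
  = t^3 + (c3 - a1 - a2) * t^2 + (a1 * a2 - k - b1 * c2 - c3 * a1 + c3 * c2) * t + (a2 * k - c3 * k + c3 * c2)"
  by (simp add: algebra_simps power2_eq_square power3_eq_cube)

lemma algRk: assumes h1: "(a1::real) = k - b1 - 1" and h2: "a2 = k - b2 - c2"
  shows "k^3 + (c3 - a1 - a2) * k^2 + (a1 * a2 - k - b1 * c2 - c3 * a1 + c3 * c2) * k + (a2 * k - c3 * k + c3 * c2)
    = k * b1 * b2 + c3 * (k * b1 + c2 * (k + 1))"
  unfolding h1 h2 by (simp add: algebra_simps power2_eq_square power3_eq_cube)

lemma cubic_neg:
  fixes e2 e1 e0 :: real
  defines "M \<equiv> 1 + \<bar>e2\<bar> + \<bar>e1\<bar> + \<bar>e0\<bar>"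
  shows "(-M)^3 + e2 * (-M)^2 + e1 * (-M) + e0 < 0"
proof -
  have M1: "M \<ge> 1" unfolding M_def by simp
  have a: "e2 * M^2 \<le> \<bar>e2\<bar> * M^2" by (simp add: mult_right_mono)
  have b: "- e1 * M \<le> \<bar>e1\<bar> * M^2"
  proof -
    have "- e1 \<le> \<bar>e1\<bar>" by simp
    hence "- e1 * M \<le> \<bar>e1\<bar> * M" using M1 by (intro mult_right_mono) auto
    also have "\<dots> \<le> \<bar>e1\<bar> * M^2" using M1 by (simp add: mult_left_mono power2_eq_square)
    finally show ?thesis .
  qed
  have c: "e0 \<le> \<bar>e0\<bar> * M^2" using M1
    by (metis abs_ge_self abs_ge_zero mult.right_neutral mult_left_mono one_le_power order_trans)
  have "(-M)^3 + e2 * (-M)^2 + e1 * (-M) + e0 = -(M^3) + e2 * M^2 - e1 * M + e0"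
    by (simp add: power2_eq_square power3_eq_cube)
  also have "\<dots> \<le> -(M^3) + (\<bar>e2\<bar> + \<bar>e1\<bar> + \<bar>e0\<bar>) * M^2" using a b c by (simp add: algebra_simps)
  also have "\<dots> = -(M^2)" unfolding M_def by (simp add: algebra_simps power2_eq_square power3_eq_cube)
  also have "\<dots> < 0" using M1 by simp
  finally show ?thesis .
qed

context drg3 begin

definition "e2 = cc 3 - aa 1 - aa 2"
definition "e1 = aa 1 * aa 2 - kk - bb 1 * cc 2 - cc 3 * aa 1 + cc 3 * cc 2"
definition "e0 = aa 2 * kk - cc 3 * kk + cc 3 * cc 2"

lemma P4_fact: "P4 t = (t - kk) * (t^3 + e2 * t^2 + e1 * t + e0)"
proof -
  have r: "aa 1 = kk - bb 1 - 1" "aa 2 = kk - bb 2 - cc 2" "aa 3 = kk - cc 3"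
    using aa_eq[of 1] aa_eq[of 2] aa_eq[of 3] params by auto
  show ?thesis unfolding P4_def P3_def P2_def e2_def e1_def e0_def
    using algR[OF r, where t=t] algRexp[of t "aa 2" "aa 1" kk "bb 1" "cc 2" "cc 3"] by simp
qed

lemma eig_fin: "finite (adj_eigenvalues V E)"
proof -
  define p where "p = [:-kk, 1:] * [:e0, e1, e2, 1:]"
  have p0: "p \<noteq> 0" unfolding p_def by simp
  have "\<And>t. poly p t = P4 t" unfolding p_def P4_fact
    by (simp add: algebra_simps power2_eq_square power3_eq_cube)
  hence "adj_eigenvalues V E \<subseteq> {t. poly p t = 0}" unfolding adj_eigenvalues_def using eig_root by auto
  thus ?thesis using poly_roots_finite[OF p0] finite_subset by blast
qed

lemma Max_eig: "Max (adj_eigenvalues V E) = kk"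
  by (rule Max_eqI[OF eig_fin]) (use eig_le_k k_eig adj_eigenvalues_def in auto)

lemma other_eig: "\<exists>\<theta>. adj_eigenvalue V E \<theta> \<and> \<theta> < kk"
proof -
  define f where "f = (\<lambda>t::real. t^3 + e2 * t^2 + e1 * t + e0)"
  define M where "M = 1 + \<bar>e2\<bar> + \<bar>e1\<bar> + \<bar>e0\<bar>"
  have fM: "f (-M) < 0" unfolding f_def M_def by (rule cubic_neg)
  have Rk: "f kk > 0"
  proof -
    have r: "aa 1 = kk - bb 1 - 1" "aa 2 = kk - bb 2 - cc 2" "aa 3 = kk - cc 3"
      using aa_eq[of 1] aa_eq[of 2] aa_eq[of 3] params by auto
    have "f kk = kk * bb 1 * bb 2 + cc 3 * (kk * bb 1 + cc 2 * (kk + 1))"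
      unfolding f_def e2_def e1_def e0_def by (rule algRk[OF r(1,2)])
    also have "\<dots> > 0" using params by (simp add: add_pos_pos)
    finally show ?thesis .
  qed
  have Mk: "-M \<le> kk" unfolding M_def using params by simp
  have cont: "continuous_on {-M..kk} f" unfolding f_def by (intro continuous_intros)
  obtain t where t: "-M \<le> t" "t \<le> kk" "f t = 0" using IVT'[of f "-M" 0 kk, OF _ _ Mk cont] fM Rk by auto
  have "t \<noteq> kk" using t Rk by auto
  moreover have "P4 t = 0" using t(3) unfolding P4_fact f_def by simp
  ultimately show ?thesis using root_eig t(2) by force
qed

lemma shilla_root:
  assumes "second_largest_eigenvalue V E = aa 3"
  shows "P2 (aa 3) = 0"
proof -
  let ?A = "adj_eigenvalues V E - {kk}"
  have fin: "finite ?A" using eig_fin by simp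
  have ne: "?A \<noteq> {}" using other_eig unfolding adj_eigenvalues_def by force
  have "Max ?A \<in> ?A" by (rule Max_in[OF fin ne])
  hence "aa 3 \<in> adj_eigenvalues V E" using assms unfolding second_largest_eigenvalue_def Max_eig by simp
  hence "P4 (aa 3) = 0" using eig_root unfolding adj_eigenvalues_def by simp
  hence "bb 2 * cc 3 * P2 (aa 3) = 0" unfolding P4_def by simp
  thus ?thesis using params by simp
qed

end

lemma bil:
  fixes A Q :: "'b \<Rightarrow> 'a \<Rightarrow> real" and R T :: "'a \<Rightarrow> real"
  shows "(\<Sum>v\<in>V. \<Sum>v'\<in>V. (\<Sum>y\<in>N. A y v * Q y v') * (R v * T v')) =
    (\<Sum>y\<in>N. (\<Sum>v\<in>V. A y v * R v) * (\<Sum>v'\<in>V. Q y v' * T v'))"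
proof -
  have "(\<Sum>y\<in>N. (\<Sum>v\<in>V. A y v * R v) * (\<Sum>v'\<in>V. Q y v' * T v'))
     = (\<Sum>y\<in>N. \<Sum>v\<in>V. \<Sum>v'\<in>V. (A y v * R v) * (Q y v' * T v'))"
    by (simp add: sum_product)
  also have "\<dots> = (\<Sum>v\<in>V. \<Sum>y\<in>N. \<Sum>v'\<in>V. (A y v * R v) * (Q y v' * T v'))"
    by (rule sum.swap)
  also have "\<dots> = (\<Sum>v\<in>V. \<Sum>v'\<in>V. \<Sum>y\<in>N. (A y v * R v) * (Q y v' * T v'))"
    by (intro sum.cong refl) (rule sum.swap)
  also have "\<dots> = (\<Sum>v\<in>V. \<Sum>v'\<in>V. (\<Sum>y\<in>N. A y v * Q y v') * (R v * T v'))"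
    by (intro sum.cong refl) (simp add: sum_distrib_right sum_distrib_left mult_ac)
  finally show ?thesis by simp
qed

lemma sq_expand:
  fixes A Q :: "'b \<Rightarrow> 'a \<Rightarrow> real"
  shows "(\<Sum>v\<in>V. \<Sum>v'\<in>V. (\<Sum>y\<in>N. A y v * Q y v')^2) =
    (\<Sum>z\<in>N. \<Sum>y\<in>N. (\<Sum>v\<in>V. A y v * A z v) * (\<Sum>v'\<in>V. Q y v' * Q z v'))"
proof -
  have "(\<Sum>v\<in>V. \<Sum>v'\<in>V. (\<Sum>y\<in>N. A y v * Q y v')^2)
      = (\<Sum>v\<in>V. \<Sum>v'\<in>V. \<Sum>z\<in>N. (\<Sum>y\<in>N. A y v * Q y v') * (A z v * Q z v'))"
    by (simp add: power2_eq_square sum_distrib_left)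
  also have "\<dots> = (\<Sum>v\<in>V. \<Sum>z\<in>N. \<Sum>v'\<in>V. (\<Sum>y\<in>N. A y v * Q y v') * (A z v * Q z v'))"
    by (intro sum.cong refl) (rule sum.swap)
  also have "\<dots> = (\<Sum>z\<in>N. \<Sum>v\<in>V. \<Sum>v'\<in>V. (\<Sum>y\<in>N. A y v * Q y v') * (A z v * Q z v'))"
    by (rule sum.swap)
  also have "\<dots> = (\<Sum>z\<in>N. \<Sum>y\<in>N. (\<Sum>v\<in>V. A y v * A z v) * (\<Sum>v'\<in>V. Q y v' * Q z v'))"
    by (intro sum.cong refl) (rule bil)
  finally show ?thesis .
qed

context drg3 begin

definition "Av \<theta> x y v = w \<theta> (gdist E y v) - w \<theta> 1 * w \<theta> (gdist E x v)"

lemma ipAu: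
  assumes r: "P4 \<theta> = 0" and x: "x \<in> V" and y: "y \<in> V" and u: "u \<in> V"
  shows "(\<Sum>v\<in>V. Av \<theta> x y v * w \<theta> (gdist E u v)) = lam \<theta> * (w \<theta> (gdist E y u) - w \<theta> 1 * w \<theta> (gdist E x u))"
proof -
  have "(\<Sum>v\<in>V. Av \<theta> x y v * w \<theta> (gdist E u v)) = (\<Sum>v\<in>V. w \<theta> (gdist E y v) * w \<theta> (gdist E u v))
     - w \<theta> 1 * (\<Sum>v\<in>V. w \<theta> (gdist E x v) * w \<theta> (gdist E u v))"
    unfolding Av_def by (simp add: algebra_simps sum_subtractf sum_distrib_left)
  also have "\<dots> = lam \<theta> * (w \<theta> (gdist E y u) - w \<theta> 1 * w \<theta> (gdist E x u))"
    using gram[OF r y u] gram[OF r x u] by (simp add: algebra_simps)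
  finally show ?thesis .
qed

lemma ipAA:
  assumes r: "P4 \<theta> = 0" and x: "x \<in> V" and y: "E x y" and z: "E x z"
  shows "(\<Sum>v\<in>V. Av \<theta> x y v * Av \<theta> x z v) = lam \<theta> * (w \<theta> (gdist E y z) - (w \<theta> 1)^2)"
proof -
  have yV: "y \<in> V" and zV: "z \<in> V" using EV y z by auto
  have "(\<Sum>v\<in>V. Av \<theta> x y v * Av \<theta> x z v) = (\<Sum>v\<in>V. Av \<theta> x y v * w \<theta> (gdist E z v))
     - w \<theta> 1 * (\<Sum>v\<in>V. Av \<theta> x y v * w \<theta> (gdist E x v))"
    unfolding Av_def[of \<theta> x z] by (simp add: algebra_simps sum_subtractf sum_distrib_left)
  also have "\<dots> = lam \<theta> * (w \<theta> (gdist E y z) - w \<theta> 1 * w \<theta> (gdist E x z))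
      - w \<theta> 1 * (lam \<theta> * (w \<theta> (gdist E y x) - w \<theta> 1 * w \<theta> (gdist E x x)))"
    using ipAu[OF r x yV zV] ipAu[OF r x yV x] by simp
  also have "\<dots> = lam \<theta> * (w \<theta> (gdist E y z) - (w \<theta> 1)^2)"
    using gdist_1[OF z] gdist_1[OF Esym[OF y]] gdist_refl[of x]
    by (simp add: w_simps algebra_simps power2_eq_square)
  finally show ?thesis .
qed

end

context drg3 begin

definition "Hf \<alpha> \<rho> j = (w \<alpha> j - (w \<alpha> 1)^2) * (w \<rho> j - (w \<rho> 1)^2)"

lemma main_eq:
  assumes ra: "P4 \<alpha> = 0" and rr: "P4 \<rho> = 0" and x: "x \<in> V"
  shows "(\<Sum>v\<in>V. \<Sum>v'\<in>V. (\<Sum>y\<in>{y\<in>V. E x y}. Av \<alpha> x y v * Av \<rho> x y v')^2)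
     = lam \<alpha> * lam \<rho> * kk * (Hf \<alpha> \<rho> 0 + aa 1 * Hf \<alpha> \<rho> 1 + bb 1 * Hf \<alpha> \<rho> 2)"
proof -
  let ?N = "{y\<in>V. E x y}"
  have "(\<Sum>v\<in>V. \<Sum>v'\<in>V. (\<Sum>y\<in>?N. Av \<alpha> x y v * Av \<rho> x y v')^2)
    = (\<Sum>z\<in>?N. \<Sum>y\<in>?N. (\<Sum>v\<in>V. Av \<alpha> x y v * Av \<alpha> x z v) * (\<Sum>v'\<in>V. Av \<rho> x y v' * Av \<rho> x z v'))"
    by (rule sq_expand)
  also have "\<dots> = (\<Sum>z\<in>?N. lam \<alpha> * lam \<rho> * (\<Sum>y\<in>?N. Hf \<alpha> \<rho> (gdist E z y)))"
  proof (rule sum.cong[OF refl])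
    fix z assume z: "z \<in> ?N"
    have "(\<Sum>y\<in>?N. (\<Sum>v\<in>V. Av \<alpha> x y v * Av \<alpha> x z v) * (\<Sum>v'\<in>V. Av \<rho> x y v' * Av \<rho> x z v'))
       = (\<Sum>y\<in>?N. lam \<alpha> * lam \<rho> * Hf \<alpha> \<rho> (gdist E z y))"
    proof (rule sum.cong[OF refl])
      fix y assume y: "y \<in> ?N"
      show "(\<Sum>v\<in>V. Av \<alpha> x y v * Av \<alpha> x z v) * (\<Sum>v'\<in>V. Av \<rho> x y v' * Av \<rho> x z v')
         = lam \<alpha> * lam \<rho> * Hf \<alpha> \<rho> (gdist E z y)"
      proof -
        have h1: "(\<Sum>v\<in>V. Av \<alpha> x y v * Av \<alpha> x z v) = lam \<alpha> * (w \<alpha> (gdist E z y) - (w \<alpha> 1)^2)"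
          using ipAA[OF ra x, of y z] y z gdist_sym[of y z] by simp
        have h2: "(\<Sum>v\<in>V. Av \<rho> x y v * Av \<rho> x z v) = lam \<rho> * (w \<rho> (gdist E z y) - (w \<rho> 1)^2)"
          using ipAA[OF rr x, of y z] y z gdist_sym[of y z] by simp
        show ?thesis unfolding h1 h2 Hf_def by (simp add: mult_ac)
      qed
    qed
    thus "(\<Sum>y\<in>?N. (\<Sum>v\<in>V. Av \<alpha> x y v * Av \<alpha> x z v) * (\<Sum>v'\<in>V. Av \<rho> x y v' * Av \<rho> x z v'))
       = lam \<alpha> * lam \<rho> * (\<Sum>y\<in>?N. Hf \<alpha> \<rho> (gdist E z y))" by (simp add: sum_distrib_left)
  qed
  also have "\<dots> = (\<Sum>z\<in>?N. lam \<alpha> * lam \<rho> * (Hf \<alpha> \<rho> 0 + aa 1 * Hf \<alpha> \<rho> 1 + bb 1 * Hf \<alpha> \<rho> 2))"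
  proof (rule sum.cong[OF refl])
    fix z assume z: "z \<in> ?N"
    have zV: "z \<in> V" and d: "gdist E z x = 1" using z gdist_1[of z x] Esym by auto
    have "(\<Sum>y\<in>?N. Hf \<alpha> \<rho> (gdist E z y)) = cc 1 * Hf \<alpha> \<rho> 0 + aa 1 * Hf \<alpha> \<rho> 1 + bb 1 * Hf \<alpha> \<rho> 2"
      using nsum[OF zV x, of "Hf \<alpha> \<rho>"] d by (simp add: numeral_2_eq_2)
    thus "lam \<alpha> * lam \<rho> * (\<Sum>y\<in>?N. Hf \<alpha> \<rho> (gdist E z y)) = lam \<alpha> * lam \<rho> * (Hf \<alpha> \<rho> 0 + aa 1 * Hf \<alpha> \<rho> 1 + bb 1 * Hf \<alpha> \<rho> 2)"
      using params by simp
  qed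
  also have "\<dots> = lam \<alpha> * lam \<rho> * kk * (Hf \<alpha> \<rho> 0 + aa 1 * Hf \<alpha> \<rho> 1 + bb 1 * Hf \<alpha> \<rho> 2)"
    using deg[OF x] by simp
  finally show ?thesis .
qed

lemma T_nonneg:
  assumes ra: "P4 \<alpha> = 0" and rr: "P4 \<rho> = 0"
  shows "Hf \<alpha> \<rho> 0 + aa 1 * Hf \<alpha> \<rho> 1 + bb 1 * Hf \<alpha> \<rho> 2 \<ge> 0"
proof -
  obtain x where x: "x \<in> V" using Vne by blast
  have "0 \<le> (\<Sum>v\<in>V. \<Sum>v'\<in>V. (\<Sum>y\<in>{y\<in>V. E x y}. Av \<alpha> x y v * Av \<rho> x y v')^2)"
    by (intro sum_nonneg) auto
  hence "0 \<le> lam \<alpha> * lam \<rho> * kk * (Hf \<alpha> \<rho> 0 + aa 1 * Hf \<alpha> \<rho> 1 + bb 1 * Hf \<alpha> \<rho> 2)"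
    using main_eq[OF ra rr x] by simp
  moreover have "lam \<alpha> * lam \<rho> * kk > 0" using lam_pos params by simp
  ultimately show ?thesis by (simp add: zero_le_mult_iff)
qed

lemma zero_cons:
  assumes ra: "P4 \<alpha> = 0" and rr: "P4 \<rho> = 0" and x: "x \<in> V" and u: "u \<in> V"
    and T0: "Hf \<alpha> \<rho> 0 + aa 1 * Hf \<alpha> \<rho> 1 + bb 1 * Hf \<alpha> \<rho> 2 = 0"
  shows "(\<Sum>y\<in>{y\<in>V. E x y}. (w \<alpha> (gdist E y u) - w \<alpha> 1 * w \<alpha> (gdist E x u))
            * (w \<rho> (gdist E y u) - w \<rho> 1 * w \<rho> (gdist E x u))) = 0"
proof -
  let ?N = "{y\<in>V. E x y}"
  let ?M = "\<lambda>v v'. (\<Sum>y\<in>?N. Av \<alpha> x y v * Av \<rho> x y v')"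
  have s0: "(\<Sum>v\<in>V. \<Sum>v'\<in>V. (?M v v')^2) = 0" using main_eq[OF ra rr x] T0 by simp
  have "\<forall>v\<in>V. (\<Sum>v'\<in>V. (?M v v')^2) = 0"
    using s0 finV by (subst (asm) sum_nonneg_eq_0_iff) (auto intro: sum_nonneg)
  hence M0: "\<And>v v'. v \<in> V \<Longrightarrow> v' \<in> V \<Longrightarrow> ?M v v' = 0"
    using finV by (subst (asm) sum_nonneg_eq_0_iff) auto
  have "0 = (\<Sum>v\<in>V. \<Sum>v'\<in>V. ?M v v' * (w \<alpha> (gdist E u v) * w \<rho> (gdist E u v')))"
    using M0 by simp
  also have "\<dots> = (\<Sum>y\<in>?N. (\<Sum>v\<in>V. Av \<alpha> x y v * w \<alpha> (gdist E u v)) * (\<Sum>v'\<in>V. Av \<rho> x y v' * w \<rho> (gdist E u v')))"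
    by (rule bil)
  also have "\<dots> = (\<Sum>y\<in>?N. lam \<alpha> * lam \<rho> * ((w \<alpha> (gdist E y u) - w \<alpha> 1 * w \<alpha> (gdist E x u))
            * (w \<rho> (gdist E y u) - w \<rho> 1 * w \<rho> (gdist E x u))))"
    by (intro sum.cong refl) (simp add: ipAu[OF ra x _ u] ipAu[OF rr x _ u])
  also have "\<dots> = lam \<alpha> * lam \<rho> * (\<Sum>y\<in>?N. (w \<alpha> (gdist E y u) - w \<alpha> 1 * w \<alpha> (gdist E x u))
            * (w \<rho> (gdist E y u) - w \<rho> 1 * w \<rho> (gdist E x u)))"
    by (simp add: sum_distrib_left)
  finally show ?thesis using lam_pos[of \<alpha>] lam_pos[of \<rho>] by simp
qed

end

lemma algS: assumes hk: "(k::real) = \<beta> * \<alpha>" and h1: "a1 = \<alpha> - \<beta>" and hb1: "b1 = k - 1 - a1"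
  and h2: "a2 = k - b2 - c2" and h3: "c3 = k - \<alpha>"
  shows "(t - \<alpha>) * ((t - a2) * ((t - a1) * t - k) - b1 * c2 * t) - b2 * c3 * ((t - a1) * t - k)
    = (t - k) * (t - \<alpha>) * (t^2 + (k + \<beta> - a2 - \<alpha>) * t + ((\<beta> - 1) * b2 - a2))"
  unfolding hb1 h2 h3 h1 hk by (simp add: algebra_simps power2_eq_square)

lemma algSb: assumes hk: "(k::real) = \<beta> * \<alpha>" and h1: "a1 = \<alpha> - \<beta>" and hb1: "b1 = k - 1 - a1"
  and h2: "a2 = k - b2 - c2"
  shows "(- \<beta> - k) * ((-\<beta>)^2 + (k + \<beta> - a2 - \<alpha>) * (-\<beta>) + ((\<beta> - 1) * b2 - a2)) = \<beta> * b1 * c2"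
  unfolding hb1 h2 h1 hk by (simp add: algebra_simps power2_eq_square)

lemma algT0: assumes b0: "(\<beta>::real) \<noteq> 0" and k0: "k \<noteq> 0" and b1: "b1 \<noteq> 0"
  shows "\<beta>^2 * k^2 * ((1 - (1/\<beta>)^2) * (1 - (t/k)^2) + a1 * ((1/\<beta>) - (1/\<beta>)^2) * ((t/k) - (t/k)^2)
     + b1 * (0 - (1/\<beta>)^2) * (((t - a1) * t - k) / (k * b1) - (t/k)^2))
     = (\<beta>^2 - 1) * (k^2 - t^2) + a1 * (\<beta> - 1) * (t * k - t^2) - k * ((t - a1) * t - k) + b1 * t^2"
  using b0 k0 b1 by (simp add: field_simps power2_eq_square)

lemma algT1: assumes hk: "(k::real) = \<beta> * \<alpha>" and h1: "a1 = \<alpha> - \<beta>" and hb1: "b1 = k - 1 - a1"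
  shows "(\<beta>^2 - 1) * (k^2 - t^2) + a1 * (\<beta> - 1) * (t * k - t^2) - k * ((t - a1) * t - k) + b1 * t^2
     = \<beta> * \<alpha> * (t + \<beta>^2) * (k - t)"
  unfolding hb1 h1 hk by (simp add: algebra_simps power2_eq_square)

lemma algE2: assumes W: "b2 * W = - c2 / \<beta>" and c2: "(c2::real) > 0" and b: "\<beta> \<noteq> 0"
  and e: "c2 * ((1/\<beta> - 1/\<beta> * 0) * (p1 - p1*p2)) + a2 * ((0 - 1/\<beta>*0) * (p2 - p1*p2)) + b2 * ((W - 1/\<beta>*0) * (p3 - p1*p2)) = 0"
  shows "p1 = p3"
proof -
  have t3: "b2 * ((W - 1/\<beta>*0) * (p3 - p1*p2)) = - c2 / \<beta> * (p3 - p1*p2)"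
  proof -
    have "b2 * ((W - 1/\<beta>*0) * (p3 - p1*p2)) = (b2 * W) * (p3 - p1*p2)" by simp
    thus ?thesis unfolding W .
  qed
  have t1: "c2 * ((1/\<beta> - 1/\<beta> * 0) * (p1 - p1*p2)) = c2 / \<beta> * (p1 - p1*p2)" by simp
  have t2: "a2 * ((0 - 1/\<beta>*0) * (p2 - p1*p2)) = 0" by simp
  have "c2 / \<beta> * (p1 - p1*p2) + - c2 / \<beta> * (p3 - p1*p2) = 0" using e unfolding t1 t2 t3 by simp
  moreover have "c2 / \<beta> * (p1 - p1*p2) + - c2 / \<beta> * (p3 - p1*p2) = c2 / \<beta> * (p1 - p3)"
    by (simp add: algebra_simps diff_divide_distrib)
  ultimately have "c2 / \<beta> * (p1 - p3) = 0" by linarith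
  thus ?thesis using c2 b by simp
qed

lemma algE3: assumes c3: "(c3::real) = \<beta> * \<alpha> - \<alpha>" and a: "\<alpha> > 0" and b: "\<beta> > 1" and W: "W \<noteq> 0"
  and e: "c3 * ((0 - 1/\<beta> * W) * (p2 - p1*p3)) + \<alpha> * ((W - 1/\<beta> * W) * (p3 - p1*p3)) = 0"
  shows "p2 = p3"
proof -
  have "c3 * ((0 - 1/\<beta> * W) * (p2 - p1*p3)) + \<alpha> * ((W - 1/\<beta> * W) * (p3 - p1*p3))
     = (\<alpha> * W * (\<beta> - 1) / \<beta>) * (p3 - p2)"
    unfolding c3 using b by (simp add: field_simps)
  hence "(\<alpha> * W * (\<beta> - 1) / \<beta>) * (p3 - p2) = 0" using e by simp
  moreover have "\<alpha> * W * (\<beta> - 1) / \<beta> \<noteq> 0" using a b W by simp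
  ultimately show ?thesis by simp
qed

context drg3 begin

lemma w_rec3: "P4 \<rho> = 0 \<Longrightarrow> cc 3 * w \<rho> 2 + aa 3 * w \<rho> 3 = \<rho> * w \<rho> 3"
  unfolding w_simps using params by (intro alg3) (auto simp: P4_def)

theorem main:
  assumes sh: "second_largest_eigenvalue V E = aa 3"
  shows "- ((aa 3 - aa 1)^2) < smallest_eigenvalue V E \<and> smallest_eigenvalue V E < - (aa 3 - aa 1)"
proof -
  define \<alpha> where "\<alpha> = aa 3"
  define \<beta> where "\<beta> = aa 3 - aa 1"
  have P2a: "P2 \<alpha> = 0" unfolding \<alpha>_def by (rule shilla_root[OF sh])
  have hk: "kk = \<beta> * \<alpha>" using P2a unfolding P2_def \<alpha>_def \<beta>_def by (simp add: algebra_simps)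
  have h1: "aa 1 = \<alpha> - \<beta>" unfolding \<alpha>_def \<beta>_def by simp
  have hb1: "bb 1 = kk - 1 - aa 1" using aa_eq[of 1] params by simp
  have h2: "aa 2 = kk - bb 2 - cc 2" using aa_eq[of 2] by simp
  have h3: "cc 3 = kk - \<alpha>" using aa_eq[of 3] params unfolding \<alpha>_def by simp
  have apos: "\<alpha> > 0"
  proof -
    have "\<alpha> \<ge> 0" unfolding \<alpha>_def using aa_nonneg[of 3] by simp
    moreover have "\<alpha> \<noteq> 0" using hk params by auto
    ultimately show ?thesis by simp
  qed
  have bgt: "\<beta> > 1"
  proof -
    have "bb 1 = (\<beta> - 1) * (\<alpha> + 1)" using hb1 hk h1 by (simp add: algebra_simps)
    hence "(\<beta> - 1) * (\<alpha> + 1) \<ge> 1" using params by simp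
    thus ?thesis
    proof -
      assume h: "(\<beta> - 1) * (\<alpha> + 1) \<ge> 1"
      show ?thesis
      proof (rule ccontr)
        assume "\<not> \<beta> > 1"
        hence "(\<beta> - 1) * (\<alpha> + 1) \<le> 0" using apos by (intro mult_nonpos_nonneg) auto
        thus False using h by simp
      qed
    qed
  qed
  define \<sigma> where "\<sigma> = kk + \<beta> - aa 2 - \<alpha>"
  define \<pi> where "\<pi> = (\<beta> - 1) * bb 2 - aa 2"
  define S where "S = (\<lambda>t. t^2 + \<sigma> * t + \<pi>)"
  have P4S: "\<And>t. P4 t = (t - kk) * (t - \<alpha>) * S t"
    unfolding P4_def P3_def P2_def S_def \<sigma>_def \<pi>_def
    using algS[OF hk h1 hb1 h2 h3] unfolding \<alpha>_def by simp
  have Sb: "S (-\<beta>) < 0"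
  proof -
    have eq: "(- \<beta> - kk) * S (-\<beta>) = \<beta> * bb 1 * cc 2" unfolding S_def \<sigma>_def \<pi>_def by (rule algSb[OF hk h1 hb1 h2])
    have pos: "\<beta> * bb 1 * cc 2 > 0" using bgt params by simp
    have neg: "- \<beta> - kk < 0" using bgt params by simp
    show ?thesis
    proof (rule ccontr)
      assume "\<not> S (-\<beta>) < 0"
      hence "(- \<beta> - kk) * S (-\<beta>) \<le> 0" using neg by (intro mult_nonpos_nonneg) auto
      thus False using pos eq by simp
    qed
  qed
  define D where "D = \<sigma>^2 - 4 * \<pi>"
  have Dpos: "D > 0"
  proof -
    have "S (-\<beta>) = (-\<beta> + \<sigma>/2)^2 - D/4" unfolding S_def D_def by (simp add: power2_eq_square field_simps)
    moreover have "(-\<beta> + \<sigma>/2)^2 \<ge> 0" by simp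
    ultimately show ?thesis using Sb by linarith
  qed
  define r where "r = (-\<sigma> - sqrt D) / 2"
  define r2 where "r2 = (-\<sigma> + sqrt D) / 2"
  have Sfac: "\<And>t. S t = (t - r) * (t - r2)"
  proof -
    fix t
    have "sqrt D * sqrt D = D" using Dpos by simp
    thus "S t = (t - r) * (t - r2)" unfolding S_def r_def r2_def D_def
      by (simp add: algebra_simps power2_eq_square) (simp add: field_simps)
  qed
  have rr2: "r \<le> r2" unfolding r_def r2_def using Dpos by simp
  have rlt: "r < -\<beta>"
  proof (rule ccontr)
    assume "\<not> r < -\<beta>"
    hence "(-\<beta> - r) * (-\<beta> - r2) \<ge> 0" using rr2 by (intro mult_nonpos_nonpos) auto
    thus False using Sb Sfac by simp
  qed
  have P4r: "P4 r = 0" using P4S Sfac by simp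
  have P4a: "P4 \<alpha> = 0" using P4S by simp
  have kpos: "kk > 0" using params by simp
  have small: "smallest_eigenvalue V E = r"
    unfolding smallest_eigenvalue_def
  proof (rule Min_eqI[OF eig_fin])
    show "r \<in> adj_eigenvalues V E" using root_eig[OF P4r] unfolding adj_eigenvalues_def by simp
    fix y assume "y \<in> adj_eigenvalues V E"
    hence "P4 y = 0" using eig_root unfolding adj_eigenvalues_def by simp
    hence "y = kk \<or> y = \<alpha> \<or> y = r \<or> y = r2" using P4S Sfac by simp
    thus "r \<le> y" using rlt bgt apos kpos rr2 by auto
  qed
  have wa1: "w \<alpha> 1 = \<alpha> / kk" by (rule w_simps(2))
  have wa2: "w \<alpha> 2 = 0" unfolding w_simps(3) P2a by simp
  have b1nz: "bb 1 \<noteq> 0" using params by simp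
  have qa: "\<alpha> / kk = 1 / \<beta>" using hk apos bgt by simp
  have Tform: "\<beta>^2 * kk^2 * (Hf \<alpha> r 0 + aa 1 * Hf \<alpha> r 1 + bb 1 * Hf \<alpha> r 2) = \<beta> * \<alpha> * (r + \<beta>^2) * (kk - r)"
  proof -
    have "Hf \<alpha> r 0 + aa 1 * Hf \<alpha> r 1 + bb 1 * Hf \<alpha> r 2 =
       (1 - (1/\<beta>)^2) * (1 - (r/kk)^2) + aa 1 * ((1/\<beta>) - (1/\<beta>)^2) * ((r/kk) - (r/kk)^2)
     + bb 1 * (0 - (1/\<beta>)^2) * (((r - aa 1) * r - kk) / (kk * bb 1) - (r/kk)^2)"
      unfolding Hf_def w_simps(1) wa1 wa2 qa unfolding w_simps P2_def by simp
    also have "\<beta>^2 * kk^2 * \<dots> = (\<beta>^2 - 1) * (kk^2 - r^2) + aa 1 * (\<beta> - 1) * (r * kk - r^2) - kk * ((r - aa 1) * r - kk) + bb 1 * r^2"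
      by (rule algT0) (use bgt params in auto)
    also have "\<dots> = \<beta> * \<alpha> * (r + \<beta>^2) * (kk - r)" by (rule algT1[OF hk h1 hb1])
    finally show ?thesis .
  qed
  have Tge: "\<beta> * \<alpha> * (r + \<beta>^2) * (kk - r) \<ge> 0" 
    using T_nonneg[OF P4a P4r] Tform[symmetric] bgt params by simp
  have krpos: "kk - r > 0" using rlt bgt kpos by simp
  have ge: "r + \<beta>^2 \<ge> 0"
  proof (rule ccontr)
    assume "\<not> r + \<beta>^2 \<ge> 0"
    hence "(\<beta> * \<alpha>) * (r + \<beta>^2) < 0" using apos bgt by (simp add: mult_pos_neg)
    hence "(\<beta> * \<alpha>) * (r + \<beta>^2) * (kk - r) < 0" using krpos by (simp add: mult_neg_pos)
    thus False using Tge by simp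
  qed
  have ne: "r \<noteq> -(\<beta>^2)"
  proof
    assume req: "r = -(\<beta>^2)"
    have T0: "Hf \<alpha> r 0 + aa 1 * Hf \<alpha> r 1 + bb 1 * Hf \<alpha> r 2 = 0" using Tform req bgt kpos by simp
    obtain x y1 u2 u3 where ch: "x \<in> V \<and> y1 \<in> V \<and> u2 \<in> V \<and> u3 \<in> V \<and> E x y1 \<and> E y1 u2 \<and> E u2 u3 \<and>
       gdist E x y1 = 1 \<and> gdist E x u2 = 2 \<and> gdist E x u3 = 3" using chain by blast
    have x: "x \<in> V" and u2: "u2 \<in> V" and u3: "u3 \<in> V" using ch by auto
    have d2: "gdist E u2 x = 2" using ch gdist_sym[OF x u2] by simp
    have d3: "gdist E u3 x = 3" using ch gdist_sym[OF x u3] by simp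
    define p1 where "p1 = w r 1"
    define p2 where "p2 = w r 2"
    define p3 where "p3 = w r 3"
    define w3 where "w3 = w \<alpha> 3"
    define q1 where "q1 = w \<alpha> 1"
    have symf: "\<And>u h. u \<in> V \<Longrightarrow> (\<Sum>y\<in>{y\<in>V. E x y}. h (gdist E y u)) = (\<Sum>y\<in>{y\<in>V. E x y}. h (gdist E u y))"
      using gdist_sym by (intro sum.cong refl) auto
    define h3 where "h3 = (\<lambda>j. (w \<alpha> j - w \<alpha> 1 * w \<alpha> 3) * (w r j - w r 1 * w r 3))"
    define h2 where "h2 = (\<lambda>j. (w \<alpha> j - w \<alpha> 1 * w \<alpha> 2) * (w r j - w r 1 * w r 2))"
    have "(\<Sum>y\<in>{y\<in>V. E x y}. h3 (gdist E y u3)) = 0" using zero_cons[OF P4a P4r x u3 T0] ch unfolding h3_def by simp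
    hence "(\<Sum>y\<in>{y\<in>V. E x y}. h3 (gdist E u3 y)) = 0" using symf[OF u3, of h3] by simp
    hence E3: "cc 3 * h3 2 + \<alpha> * h3 3 = 0"
      using nsum[OF u3 x, of h3] d3 params unfolding \<alpha>_def by (simp add: numeral_2_eq_2 numeral_3_eq_3)
    have "(\<Sum>y\<in>{y\<in>V. E x y}. h2 (gdist E y u2)) = 0" using zero_cons[OF P4a P4r x u2 T0] ch unfolding h2_def by simp
    hence "(\<Sum>y\<in>{y\<in>V. E x y}. h2 (gdist E u2 y)) = 0" using symf[OF u2, of h2] by simp
    hence E2: "cc 2 * h2 1 + aa 2 * h2 2 + bb 2 * h2 3 = 0"
      using nsum[OF u2 x, of h2] d2 by (simp add: numeral_2_eq_2 numeral_3_eq_3)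
    have q: "w \<alpha> 1 = 1/\<beta>" using wa1 qa by simp
    have W: "w \<alpha> 3 = - cc 2 * \<alpha> / (kk * bb 2)" unfolding w_simps(4) P3_def P2a using params by (simp add: field_simps)
    have Wnz: "w \<alpha> 3 \<noteq> 0" unfolding W using params apos by simp
    have Wb: "bb 2 * w \<alpha> 3 = - cc 2 / \<beta>" unfolding W using params qa by (simp add: field_simps)
    have c3e: "cc 3 = \<beta> * \<alpha> - \<alpha>" using h3 hk by simp
    have p23: "w r 2 = w r 3"
      by (rule algE3[OF c3e apos bgt Wnz]) (use E3 in \<open>unfold h3_def q wa2\<close>)
    have p13: "w r 1 = w r 3"
      by (rule algE2[OF Wb]) (use params bgt E2 in \<open>unfold h2_def q wa2, auto\<close>)
    have "cc 3 * w r 2 + aa 3 * w r 3 = r * w r 3" by (rule w_rec3[OF P4r])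
    hence "kk * w r 3 = r * w r 3" using p23 h3 unfolding \<alpha>_def by (simp add: algebra_simps)
    hence "(kk - r) * w r 3 = 0" by (simp add: algebra_simps)
    hence "w r 3 = 0" using krpos by simp
    hence "r / kk = 0" using p13 w_simps(2)[of r] by simp
    hence "r = 0" using kpos by simp
    thus False using rlt bgt by simp
  qed
  show ?thesis using small rlt ge ne unfolding \<beta>_def by auto
qed

end


theorem corollary16:
  fixes V :: "'a set" and E :: "'a \<Rightarrow> 'a \<Rightarrow> bool" and b c :: "nat \<Rightarrow> nat"
  assumes "shilla V E b c"
  shows "- ((real_of_int (intersection_a b c 3 - intersection_a b c 1))^2) < smallest_eigenvalue V E
       \<and> smallest_eigenvalue V E < - real_of_int (intersection_a b c 3 - intersection_a b c 1)"
proof -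
  have dr: "distance_regular V E 3 b c" and sh: "second_largest_eigenvalue V E = real_of_int (intersection_a b c 3)"
    using assms unfolding shilla_def by auto
  interpret d: drg3 V E b c by unfold_locales (rule dr)
  show ?thesis using d.main[OF sh] by (simp only: of_int_diff)
qed

end
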